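(* There exists a continuous function $f:\mathbb{R}\to\mathbb{R}$ such that for every $x\in\mathbb{R}$ there is $\xi_x\in\mathbb{R}$ with $$\liminf_{y\to x}\frac{f(y)-f(x)-\xi_x(y-x)}{|y-x|^2}>-\infty,$$ and yet there is a set $S\subset\mathbb{R}$ of positive Lebesgue measure such that for every $x\in S$ and every $\xi\in\mathbb{R}$, $$\limsup_{y\to x}\frac{f(y)-f(x)-\xi(y-x)}{|y-x|^2}=+\infty.$$ *)

theory Defs
  imports "HOL-Analysis.Analysis"
begin

end

theory Submission
  imports Defs
begin


definition hh :: "nat \<Rightarrow> real" where "hh n = 1/2^n"
definition rr :: "nat \<Rightarrow> real" where "rr n = 1/(8*16^n)"
definition aa :: "nat \<Rightarrow> real" where "aa n = hh n / (rr n)^2"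
definition dd :: "nat \<Rightarrow> real \<Rightarrow> real" where
  "dd n y = arccos (cos (2*pi*2^n*y)) / (2*pi*2^n)"
definition pp :: "nat \<Rightarrow> real \<Rightarrow> real" where
  "pp n y = max 0 (hh n - aa n * (dd n y)^2)"

lemma hh_pos: "hh n > 0" by (simp add: hh_def)
lemma rr_pos: "rr n > 0" by (simp add: rr_def)
lemma aa_pos: "aa n > 0" using hh_pos[of n] rr_pos[of n] by (simp add: aa_def)
lemma aa_rr: "aa n * (rr n)^2 = hh n" using rr_pos[of n] by (simp add: aa_def)

lemma arccos_cos_abs: "arccos (cos t) \<le> \<bar>t\<bar>"
proof -
  have c: "cos t = cos \<bar>t\<bar>" by (simp add: abs_if)
  show ?thesis
  proof (cases "\<bar>t\<bar> \<le> pi")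
    case True then show ?thesis using c arccos_cos[of "\<bar>t\<bar>"] by simp
  next
    case False then show ?thesis using arccos_ubound[of "cos t"] by simp
  qed
qed

lemma arccos_cos_abs_eq: "\<bar>t\<bar> \<le> pi \<Longrightarrow> arccos (cos t) = \<bar>t\<bar>"
proof -
  assume "\<bar>t\<bar> \<le> pi"
  have c: "cos t = cos \<bar>t\<bar>" by (simp add: abs_if)
  show ?thesis using c arccos_cos[of "\<bar>t\<bar>"] \<open>\<bar>t\<bar> \<le> pi\<close> by simp
qed

lemma cos_shift: "cos (2*pi*2^n*y) = cos (2*pi*(2^n*y - of_int m))"
proof -
  have "2*pi*(2^n*y - of_int m) = 2*pi*2^n*y - (2*pi) * of_int m" by (simp add: algebra_simps)
  then show ?thesis by (simp add: cos_diff)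
qed

lemma dd_nonneg: "0 \<le> dd n y"
  unfolding dd_def by (intro divide_nonneg_pos arccos_lbound) auto

lemma dd_le: "dd n y \<le> \<bar>y - of_int m / 2^n\<bar>"
proof -
  have p: "(2*pi*2^n::real) > 0" by simp
  have "arccos (cos (2*pi*2^n*y)) \<le> \<bar>2*pi*(2^n*y - of_int m)\<bar>"
    unfolding cos_shift[of n y m] by (rule arccos_cos_abs)
  also have "\<dots> = (2*pi*2^n) * \<bar>y - of_int m / 2^n\<bar>"
  proof -
    have e: "2^n*y - of_int m = (2::real)^n * (y - of_int m / 2^n)" by (simp add: field_simps)
    show ?thesis by (simp only: e abs_mult) (simp add: mult.assoc)
  qed
  finally show ?thesis unfolding dd_def using p by (simp add: divide_le_eq mult.commute)
qed

lemma dd_eq: "dd n y = \<bar>y - of_int (round (2^n*y)) / 2^n\<bar>"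
proof -
  have p: "(2*pi*2^n::real) > 0" by simp
  have r: "\<bar>2^n*y - of_int (round (2^n*y))\<bar> \<le> 1/2" using of_int_round_abs_le[of "2^n*y"] by linarith
  have "\<bar>2*pi*(2^n*y - of_int (round (2^n*y)))\<bar> \<le> pi"
    using r pi_gt_zero by (simp add: abs_mult)
  then have "arccos (cos (2*pi*2^n*y)) = \<bar>2*pi*(2^n*y - of_int (round (2^n*y)))\<bar>"
    unfolding cos_shift[of n y "round (2^n*y)"] by (rule arccos_cos_abs_eq)
  also have "\<dots> = (2*pi*2^n) * \<bar>y - of_int (round (2^n*y)) / 2^n\<bar>"
  proof -
    have e: "2^n*y - of_int (round (2^n*y)) = (2::real)^n * (y - of_int (round (2^n*y)) / 2^n)" by (simp add: field_simps)
    show ?thesis by (simp only: e abs_mult) (simp add: mult.assoc)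
  qed
  finally show ?thesis unfolding dd_def using p by simp
qed

lemma pp_nonneg: "0 \<le> pp n y" by (simp add: pp_def)
lemma pp_le: "pp n y \<le> hh n" using hh_pos[of n] aa_pos[of n] by (simp add: pp_def)
lemma pp_ge: "pp n y \<ge> hh n - aa n * (y - of_int m / 2^n)^2"
proof -
  have "(dd n y)^2 \<le> (y - of_int m / 2^n)^2"
    using dd_le[of n y m] dd_nonneg[of n y] by (metis abs_le_square_iff abs_of_nonneg)
  then show ?thesis using aa_pos[of n] unfolding pp_def
    by (smt (verit) mult_left_mono)
qed

lemma pp_cont: "continuous_on UNIV (pp n)"
  unfolding pp_def dd_def by (intro continuous_intros) auto

fun FF :: "nat \<Rightarrow> real \<Rightarrow> real" where
  "FF 0 y = 0" | "FF (Suc N) y = max (FF N y) (pp N y)"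

definition ff :: "real \<Rightarrow> real" where "ff y = (SUP n. pp n y)"

lemma hh_le1: "hh n \<le> 1" by (simp add: hh_def)
lemma hh_mono: "m \<le> n \<Longrightarrow> hh n \<le> hh m"
  unfolding hh_def by (intro divide_left_mono power_increasing) auto

lemma bdd_pp: "bdd_above (range (\<lambda>n. pp n y))"
  using pp_le hh_le1 by (intro bdd_aboveI[of _ 1]) (auto intro: order_trans)

lemma ff_ge: "pp n y \<le> ff y"
  unfolding ff_def using bdd_pp[of y] by (intro cSUP_upper) auto

lemma ff_nonneg: "0 \<le> ff y" using ff_ge[of 0 y] pp_nonneg[of 0 y] by linarith

lemma FF_nonneg: "0 \<le> FF N y" by (induction N) auto
lemma FF_ge: "n < N \<Longrightarrow> pp n y \<le> FF N y"
  by (induction N) (auto simp: less_Suc_eq)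
lemma FF_le: "FF N y \<le> ff y"
  by (induction N) (auto simp: ff_nonneg ff_ge)
lemma FF_cases: "FF N y = 0 \<or> (\<exists>n<N. FF N y = pp n y)"
  by (induction N) (auto simp: max_def less_Suc_eq)
lemma FF_cont: "continuous_on UNIV (FF N)"
  by (induction N) (auto intro!: continuous_intros pp_cont)

lemma ff_le: "ff y \<le> max (FF N y) (hh N)"
  unfolding ff_def
proof (rule cSUP_least)
  fix n
  show "pp n y \<le> max (FF N y) (hh N)"
  proof (cases "n < N")
    case True then show ?thesis using FF_ge[of n N y] by simp
  next
    case False then show ?thesis using pp_le[of n y] hh_mono[of N n] by simp
  qed
qed auto

lemma ff_FF: "\<bar>ff y - FF N y\<bar> \<le> hh N"
  using ff_le[of y N] FF_le[of N y] FF_nonneg[of N y] hh_pos[of N] by (auto simp: max_def split: if_splits)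

lemma ff_cont: "continuous_on UNIV ff"
proof (rule uniform_limit_theorem)
  show "\<forall>\<^sub>F n in sequentially. continuous_on UNIV (FF n)" by (simp add: FF_cont)
  show "uniform_limit UNIV FF ff sequentially"
    unfolding uniform_limit_sequentially_iff
  proof (intro allI impI)
    fix e :: real assume e: "e > 0"
    obtain N where N: "(1/2::real)^N < e" using real_arch_pow_inv[OF e, of "1/2"] by auto
    show "\<exists>N. \<forall>n\<ge>N. \<forall>x\<in>UNIV. dist (FF n x) (ff x) < e"
    proof (intro exI allI impI ballI)
      fix n x assume "N \<le> n"
      have "dist (FF n x) (ff x) \<le> hh n" using ff_FF[of x n] by (simp add: dist_real_def abs_minus_commute)
      also have "\<dots> \<le> hh N" using hh_mono \<open>N \<le> n\<close> by simp
      also have "\<dots> < e" using N by (simp add: hh_def power_divide)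
      finally show "dist (FF n x) (ff x) < e" .
    qed
  qed
qed simp

lemma ff_attained: "ff x > 0 \<Longrightarrow> \<exists>n. ff x = pp n x"
proof -
  assume p: "ff x > 0"
  obtain N where N: "(1/2::real)^N < ff x" using real_arch_pow_inv[OF p, of "1/2"] by auto
  then have "hh N < ff x" by (simp add: hh_def power_divide)
  then have "ff x \<le> FF N x" using ff_le[of x N] by (simp add: max_def split: if_splits)
  then have e: "ff x = FF N x" using FF_le[of N x] by simp
  then show ?thesis using FF_cases[of N x] p by auto
qed

lemma liminf_gt:
  fixes F :: "real \<Rightarrow> real"
  assumes "\<And>y. y \<noteq> x \<Longrightarrow> C \<le> F y"
  shows "Liminf (at x) (\<lambda>y. ereal (F y)) > -\<infinity>"
proof -
  have "eventually (\<lambda>y. ereal C \<le> ereal (F y)) (at x)"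
    unfolding eventually_at_filter using assms by simp
  then have "ereal C \<le> Liminf (at x) (\<lambda>y. ereal (F y))" by (rule Liminf_bounded)
  then show ?thesis by (rule less_le_trans[rotated]) simp
qed

lemma limsup_inf:
  fixes F :: "real \<Rightarrow> real"
  assumes "\<And>M e. e > 0 \<Longrightarrow> \<exists>y. y \<noteq> x \<and> \<bar>y - x\<bar> < e \<and> M \<le> F y"
  shows "Limsup (at x) (\<lambda>y. ereal (F y)) = \<infinity>"
proof -
  have "\<forall>P\<in>{P. eventually P (at x)}. (SUP y\<in>Collect P. ereal (F y)) = top"
  proof
    fix P assume "P \<in> {P. eventually P (at x)}"
    then obtain d where d: "d > 0" "\<And>y. y \<noteq> x \<Longrightarrow> dist y x < d \<Longrightarrow> P y"
      unfolding eventually_at by auto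
    show "(SUP y\<in>Collect P. ereal (F y)) = top"
      unfolding top_ereal_def
    proof (rule ereal_top)
      fix M :: real
      obtain y where y: "y \<noteq> x" "\<bar>y - x\<bar> < d" "M \<le> F y" using assms[OF d(1)] by blast
      then have "P y" using d(2)[of y] by (simp add: dist_real_def)
      then have "ereal (F y) \<le> (SUP y\<in>Collect P. ereal (F y))" by (intro SUP_upper) auto
      moreover have "ereal M \<le> ereal (F y)" using y(3) by simp
      ultimately show "ereal M \<le> (SUP y\<in>Collect P. ereal (F y))" by (rule order_trans[rotated])
    qed
  qed
  then have "Limsup (at x) (\<lambda>y. ereal (F y)) = top"
    unfolding Limsup_def by simp
  then show ?thesis by (simp add: top_ereal_def)
qed

lemma ff_lower: "\<exists>\<xi> C. \<forall>y. y \<noteq> x \<longrightarrow> C \<le> (ff y - ff x - \<xi> * (y - x)) / \<bar>y - x\<bar>^2"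
proof (cases "ff x > 0")
  case False
  then have z: "ff x = 0" using ff_nonneg[of x] by simp
  show ?thesis
    by (rule exI[of _ 0], rule exI[of _ 0]) (simp add: z ff_nonneg)
next
  case True
  then obtain n where n: "ff x = pp n x" using ff_attained by blast
  define q where "q = of_int (round (2^n*x)) / (2::real)^n"
  have "pp n x > 0" using n True by simp
  then have px: "ff x = hh n - aa n * (x - q)^2"
    using n dd_eq[of n x] unfolding pp_def q_def by (simp add: max_def power2_abs split: if_splits)
  have py: "ff y \<ge> hh n - aa n * (y - q)^2" for y
    using ff_ge[of n y] pp_ge[of n y "round (2^n*x)"] unfolding q_def by linarith
  show ?thesis
  proof (rule exI[of _ "-2*aa n*(x-q)"], rule exI[of _ "- aa n"], intro allI impI)
    fix y assume "y \<noteq> x"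
    then have d: "\<bar>y - x\<bar>^2 > 0" by simp
    have "ff y - ff x - (-2*aa n*(x-q)) * (y - x) \<ge> - aa n * \<bar>y - x\<bar>^2"
    proof -
      have "ff y - ff x - (-2*aa n*(x-q)) * (y - x) \<ge> hh n - aa n * (y - q)^2 - (hh n - aa n * (x - q)^2) + 2*aa n*(x-q)*(y-x)"
        using py[of y] px by simp
      also have "hh n - aa n * (y - q)^2 - (hh n - aa n * (x - q)^2) + 2*aa n*(x-q)*(y-x) = - aa n * \<bar>y - x\<bar>^2"
        by (simp add: power2_eq_square algebra_simps)
      finally show ?thesis .
    qed
    then show "- aa n \<le> (ff y - ff x - (-2*aa n*(x-q)) * (y - x)) / \<bar>y - x\<bar>^2"
      using d by (simp add: le_divide_eq)
  qed
qed

definition UU :: "real set" where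
  "UU = (\<Union>n. \<Union>m\<in>{0..(2::nat)^n}. ball (real m / 2^n) (rr n))"
definition SS :: "real set" where "SS = {0..1} - UU"

lemma SS_dd: "x \<in> SS \<Longrightarrow> rr n \<le> dd n x"
proof -
  assume x: "x \<in> SS"
  then have x01: "0 \<le> x" "x \<le> 1" and nU: "x \<notin> UU" by (auto simp: SS_def)
  define m where "m = round (2^n*x)"
  have "of_int m \<ge> 2^n*x - 1/2" unfolding m_def by (rule of_int_round_ge)
  moreover have "2^n*x \<ge> (0::real)" using x01 by simp
  ultimately have "(-1::real) < of_int m" by linarith
  then have m0: "m \<ge> 0" by simp
  have "of_int m \<le> 2^n*x + 1/2" unfolding m_def by (rule of_int_round_le)
  also have "\<dots> < 2^n + 1"
  proof -
    have "(2::real)^n*x \<le> 2^n*1" by (rule mult_left_mono) (use x01 in auto)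
    then show ?thesis by linarith
  qed
  finally have "of_int m < (of_int (2^n + 1) :: real)" by simp
  then have "m < 2^n + 1" by (simp only: of_int_less_iff)
  then have m1: "nat m \<in> {0..(2::nat)^n}" using m0 by auto
  have "x \<notin> ball (real (nat m) / 2^n) (rr n)" using nU m1 unfolding UU_def by blast
  then have "rr n \<le> \<bar>x - of_int m / 2^n\<bar>" using m0 by (simp add: dist_real_def abs_minus_commute)
  then show ?thesis using dd_eq[of n x] unfolding m_def by simp
qed

lemma SS_ff: "x \<in> SS \<Longrightarrow> ff x = 0"
proof -
  assume x: "x \<in> SS"
  have "pp n x = 0" for n
  proof -
    have "(rr n)^2 \<le> (dd n x)^2" using SS_dd[OF x, of n] rr_pos[of n] by (intro power_mono) auto
    then have "hh n \<le> aa n * (dd n x)^2" using aa_rr[of n] aa_pos[of n] by (metis mult_left_mono less_imp_le)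
    then show ?thesis by (simp add: pp_def)
  qed
  then have "ff x \<le> 0" unfolding ff_def by (intro cSUP_least) auto
  then show ?thesis using ff_nonneg[of x] by simp
qed

lemma SS_limsup:
  assumes x: "x \<in> SS"
  shows "Limsup (at x) (\<lambda>y. ereal ((ff y - ff x - \<xi> * (y - x)) / \<bar>y - x\<bar>^2)) = \<infinity>"
proof (rule limsup_inf)
  fix M e :: real assume e: "e > 0"
  obtain n1 where n1: "M < 2^n1" using real_arch_pow[of 2 M] by auto
  obtain n2 where n2: "(1/2::real)^n2 < e" using real_arch_pow_inv[OF e, of "1/2"] by auto
  define n where "n = max n1 n2"
  have "(2::real)^n1 \<le> 2^n" by (rule power_increasing) (auto simp: n_def)
  then have Mn: "M \<le> 2^n" using n1 by linarith
  have "(1/2::real)^n \<le> (1/2)^n2" by (rule power_decreasing) (auto simp: n_def)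
  then have en: "1/2^n < e" using n2 by (simp add: power_divide)
  define k where "k = floor (2^n*x)"
  have k1: "of_int k \<le> 2^n*x" "2^n*x < of_int k + 1" unfolding k_def by linarith+
  define m where "m = (if \<xi> \<ge> 0 then k else k + 1)"
  define y where "y = of_int m / (2::real)^n"
  have p: "(2::real)^n > 0" by simp
  have ty: "2^n*y = of_int m" unfolding y_def using p by simp
  define D where "D = 2^n*y - 2^n*x"
  have yxD: "y - x = D / 2^n" unfolding D_def using p by (simp add: field_simps)
  have bnd: "(\<xi> \<ge> 0 \<longrightarrow> -1 < D \<and> D \<le> 0) \<and> (\<xi> < 0 \<longrightarrow> 0 < D \<and> D \<le> 1)"
    using k1 ty unfolding m_def D_def by auto
  have close: "\<bar>y - x\<bar> \<le> 1/2^n"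
  proof -
    have "\<bar>D\<bar> \<le> 1" using bnd by (cases "\<xi> \<ge> 0") auto
    then show ?thesis unfolding yxD using p by (simp add: divide_right_mono)
  qed
  have side: "\<xi> * (y - x) \<le> 0"
  proof (cases "\<xi> \<ge> 0")
    case True
    then have "y - x \<le> 0" unfolding yxD using bnd p by (simp add: divide_nonpos_pos)
    then show ?thesis using True by (simp add: mult_nonneg_nonpos)
  next
    case False
    then have "y - x \<ge> 0" unfolding yxD using bnd p by simp
    then show ?thesis using False by (simp add: mult_nonpos_nonneg)
  qed
  have yx: "y \<noteq> x"
  proof
    assume "y = x"
    then have "dd n x \<le> 0" using dd_le[of n x m] unfolding y_def by simp
    then show False using SS_dd[OF x, of n] rr_pos[of n] by simp
  qed
  have fy: "ff y \<ge> hh n" using ff_ge[of n y] pp_ge[of n y m] unfolding y_def by simp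
  have num: "ff y - ff x - \<xi> * (y - x) \<ge> hh n" using fy side SS_ff[OF x] by simp
  have d0: "\<bar>y - x\<bar>^2 > 0" using yx by simp
  have d1: "\<bar>y - x\<bar>^2 \<le> (1/2^n)^2" using close by (intro power_mono) auto
  have "M \<le> hh n / (1/2^n)^2" using Mn by (simp add: hh_def power_divide power2_eq_square)
  also have "\<dots> \<le> hh n / \<bar>y - x\<bar>^2" using d0 d1 hh_pos[of n] by (intro divide_left_mono) auto
  also have "\<dots> \<le> (ff y - ff x - \<xi> * (y - x)) / \<bar>y - x\<bar>^2" using num d0 by (intro divide_right_mono) auto
  finally show "\<exists>y. y \<noteq> x \<and> \<bar>y - x\<bar> < e \<and> M \<le> (ff y - ff x - \<xi> * (y - x)) / \<bar>y - x\<bar>^2"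
    using yx close en by (intro exI[of _ y]) auto
qed

lemma SS_borel: "SS \<in> sets lborel"
proof -
  have "open UU" unfolding UU_def by (intro open_UN open_ball) auto
  then show ?thesis unfolding SS_def by (intro sets.Diff borel_closed borel_open) auto
qed

lemma UU_borel: "UU \<in> sets lborel"
  unfolding UU_def sets_lborel by (intro borel_open open_UN ballI open_ball)

lemma Un_measure: "emeasure lborel (\<Union>m\<in>{0..(2::nat)^n}. ball (real m / 2^n) (rr n)) \<le> ennreal ((1/2)*(1/8)^n)"
proof -
  have "emeasure lborel (\<Union>m\<in>{0..(2::nat)^n}. ball (real m / 2^n) (rr n))
      \<le> (\<Sum>m\<in>{0..(2::nat)^n}. emeasure lborel (ball (real m / 2^n) (rr n)))"
    by (intro emeasure_subadditive_finite) auto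
  also have "\<dots> = (\<Sum>m\<in>{0..(2::nat)^n}. ennreal (2 * rr n))"
    using rr_pos[of n] by (intro sum.cong refl) (simp add: ball_eq_greaterThanLessThan)
  also have "\<dots> = ennreal (\<Sum>m\<in>{0..(2::nat)^n}. 2 * rr n)"
    using rr_pos[of n] by (intro sum_ennreal) auto
  also have "(\<Sum>m\<in>{0..(2::nat)^n}. 2 * rr n) = (2^n + 1) * (2 * rr n)" by simp
  also have "\<dots> \<le> (2 * 2^n) * (2 * rr n)"
    using rr_pos[of n] by (intro mult_right_mono) (auto simp: one_le_power)
  also have "\<dots> = (1/2)*(1/8)^n"
    by (simp add: rr_def power_divide field_simps flip: power_mult_distrib)
  finally show ?thesis by (simp add: ennreal_leI order_trans)
qed

lemma UU_measure: "emeasure lborel UU \<le> ennreal (4/7)"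
proof -
  have "emeasure lborel UU \<le> (\<Sum>n. emeasure lborel (\<Union>m\<in>{0..(2::nat)^n}. ball (real m / 2^n) (rr n)))"
    unfolding UU_def by (intro emeasure_subadditive_countably) auto
  also have "\<dots> \<le> (\<Sum>n. ennreal ((1/2)*(1/8)^n))"
    by (intro suminf_le Un_measure) auto
  also have "\<dots> = ennreal (\<Sum>n. (1/2)*(1/8::real)^n)"
    by (intro suminf_ennreal2) (auto intro!: summable_mult summable_geometric)
  also have "(\<Sum>n. (1/2)*(1/8::real)^n) = 4/7"
  proof -
    have "(\<lambda>n. (1/8::real)^n) sums (1/(1 - 1/8))" by (rule geometric_sums) simp
    then have "(\<lambda>n. (1/2) * (1/8::real)^n) sums ((1/2) * (1/(1 - 1/8)))" by (rule sums_mult)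
    then show ?thesis by (simp add: sums_unique[symmetric])
  qed
  finally show ?thesis .
qed

lemma SS_pos: "emeasure lebesgue SS > 0"
proof -
  have eq: "emeasure lebesgue SS = emeasure lborel SS" using SS_borel by simp
  have "ennreal 1 = emeasure lborel {0..1::real}" by simp
  also have "\<dots> \<le> emeasure lborel (SS \<union> UU)"
    using SS_borel UU_borel by (intro emeasure_mono) (auto simp: SS_def)
  also have "\<dots> \<le> emeasure lborel SS + emeasure lborel UU"
    using SS_borel UU_borel by (rule emeasure_subadditive)
  finally have le: "ennreal 1 \<le> emeasure lborel SS + emeasure lborel UU" .
  show ?thesis
  proof (rule ccontr)
    assume "\<not> emeasure lebesgue SS > 0"
    then have "emeasure lborel SS = 0" using eq by (simp add: not_gr_zero)
    then have "ennreal 1 \<le> ennreal (4/7)" using le UU_measure by (metis add_0 order_trans)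
    then show False by (simp add: ennreal_le_iff)
  qed
qed


theorem mainTheorem9:
  shows "\<exists>f :: real \<Rightarrow> real. continuous_on UNIV f \<and>
    (\<forall>x. \<exists>\<xi>. Liminf (at x) (\<lambda>y. ereal ((f y - f x - \<xi> * (y - x)) / \<bar>y - x\<bar>^2)) > -\<infinity>) \<and>
    (\<exists>S. S \<in> sets lebesgue \<and> emeasure lebesgue S > 0 \<and>
       (\<forall>x\<in>S. \<forall>\<xi>. Limsup (at x) (\<lambda>y. ereal ((f y - f x - \<xi> * (y - x)) / \<bar>y - x\<bar>^2)) = \<infinity>))"
proof (intro exI[of _ ff] conjI allI ballI)
  show "continuous_on UNIV ff" by (rule ff_cont)
next
  fix x
  obtain \<xi> C where "\<forall>y. y \<noteq> x \<longrightarrow> C \<le> (ff y - ff x - \<xi> * (y - x)) / \<bar>y - x\<bar>^2"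
    using ff_lower[of x] by blast
  then show "\<exists>\<xi>. Liminf (at x) (\<lambda>y. ereal ((ff y - ff x - \<xi> * (y - x)) / \<bar>y - x\<bar>^2)) > -\<infinity>"
    by (intro exI[of _ \<xi>] liminf_gt[of x C]) auto
next
  show "\<exists>S. S \<in> sets lebesgue \<and> emeasure lebesgue S > 0 \<and>
       (\<forall>x\<in>S. \<forall>\<xi>. Limsup (at x) (\<lambda>y. ereal ((ff y - ff x - \<xi> * (y - x)) / \<bar>y - x\<bar>^2)) = \<infinity>)"
    using SS_borel SS_pos SS_limsup by (intro exI[of _ SS]) auto
qed

end
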